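(* Let $n \ge 2$ be an integer, let $1 \le \underline{x}_i < \bar{x}_i$ for $i \in \{1,2\}$, and let $\varepsilon \ge 2^{-2^{n-1}}$. For $x=(x_1,x_2) \in X := [\underline{x}_1,\bar{x}_1] \times [\underline{x}_2,\bar{x}_2]$, let $S_\varepsilon(x)$ denote the set of $\varepsilon$-feasible follower's solutions of the lower-level problem $$\max_{y \in \mathbb{R}^{n+2}} \; y_1 - y_n\,(x_1 + x_2 - y_{n+1} - y_{n+2})$$ subject to $y_1 + y_n = \tfrac12$, $y_i^2 \le y_{i+1}$ for $i \in \{1,\dots,n-1\}$, $y_i \ge 0$ for $i \in \{1,\dots,n\}$, $y_{n+1} \in [0,x_1]$, $y_{n+2} \in [-x_2,x_2]$, and let $F(x,y) = x_1 - 2y_{n+1} + y_{n+2}$. Then the optimistic problem $\max_{x \in X} \max_{y \in S_\varepsilon(x)} F(x,y)$ has the optimal solution $x^*_{\mathrm{o}} = (\bar{x}_1,\bar{x}_2)$ with optimal objective value $F^*_{\mathrm{o}} = \bar{x}_1 + \bar{x}_2$, and the pessimistic problem $\max_{x \in X} \min_{y \in S_\varepsilon(x)} F(x,y)$ has the optimal solution $x^*_{\mathrm{p}} = (\underline{x}_1,\underline{x}_2)$ with optimal objective value $F^*_{\mathrm{p}} = -\underline{x}_1 - \underline{x}_2$.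
   Context: For $\varepsilon>0$, a point is $\varepsilon$-feasible for the lower-level problem if it satisfies all linear constraints ($y_1+y_n=\tfrac12$, $y_i\ge0$ for $i\le n$, the bounds on $y_{n+1},y_{n+2}$) exactly and satisfies $y_i^2 - y_{i+1} \le \varepsilon$ for all $i \in \{1,\dots,n-1\}$ (the only nonlinear constraints). An $\varepsilon$-feasible follower's solution for given $x$ is an $\varepsilon$-feasible point maximizing the lower-level objective over all $\varepsilon$-feasible points. *)

theory Defs
  imports "HOL-Analysis.Analysis" "HOL-Library.Extended_Real"
begin

text \<open>Vectors y in R^(n+2) are represented as functions nat => real with
  components y 1, ..., y (n+2) and all other entries equal to 0.
  Leader variables x = (x1, x2) are pairs of reals.\<close>

definition eps_feasible :: "nat \<Rightarrow> real \<Rightarrow> real \<times> real \<Rightarrow> (nat \<Rightarrow> real) \<Rightarrow> bool" where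
  "eps_feasible n \<epsilon> x y \<longleftrightarrow>
     (\<forall>i. i \<notin> {1..n+2} \<longrightarrow> y i = 0) \<and>
     y 1 + y n = 1/2 \<and>
     (\<forall>i\<in>{1..n}. 0 \<le> y i) \<and>
     0 \<le> y (n+1) \<and> y (n+1) \<le> fst x \<and>
     - snd x \<le> y (n+2) \<and> y (n+2) \<le> snd x \<and>
     (\<forall>i\<in>{1..n-1}. (y i)\<^sup>2 - y (i+1) \<le> \<epsilon>)"

definition ll_obj :: "nat \<Rightarrow> real \<times> real \<Rightarrow> (nat \<Rightarrow> real) \<Rightarrow> real" where
  "ll_obj n x y = y 1 - y n * (fst x + snd x - y (n+1) - y (n+2))"

definition follower_sol :: "nat \<Rightarrow> real \<Rightarrow> real \<times> real \<Rightarrow> (nat \<Rightarrow> real) set" where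
  "follower_sol n \<epsilon> x =
     {y. eps_feasible n \<epsilon> x y \<and> (\<forall>z. eps_feasible n \<epsilon> x z \<longrightarrow> ll_obj n x z \<le> ll_obj n x y)}"

definition ul_obj :: "nat \<Rightarrow> real \<times> real \<Rightarrow> (nat \<Rightarrow> real) \<Rightarrow> real" where
  "ul_obj n x y = fst x - 2 * y (n+1) + y (n+2)"

end

theory Submission
  imports Defs
begin

definition wit :: "nat \<Rightarrow> real \<Rightarrow> real \<Rightarrow> nat \<Rightarrow> real" where
  "wit n a b i = (if i = n+1 then a else if i = n+2 then b
     else if 1 \<le> i \<and> i < n then (1/2) ^ (2 ^ (i-1)) else 0)"

lemma wit_feas:
  assumes n: "n \<ge> 2" and e: "\<epsilon> \<ge> 1 / 2 ^ (2 ^ (n - 1))"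
    and a: "0 \<le> a" "a \<le> fst x" and b: "- snd x \<le> b" "b \<le> snd x"
  shows "eps_feasible n \<epsilon> x (wit n a b)"
proof -
  have epos: "\<epsilon> > 0" using e by (smt (verit) divide_pos_pos zero_less_power)
  have c: "(wit n a b i)\<^sup>2 - wit n a b (i+1) \<le> \<epsilon>" if i: "i \<in> {1..n-1}" for i
  proof (cases "i + 1 < n")
    case True
    have "((1/2::real) ^ (2 ^ (i-1)))\<^sup>2 = (1/2) ^ (2 ^ (i-1) * 2)"
      by (simp add: power_mult)
    also have "2 ^ (i-1) * 2 = (2::nat) ^ (i+1-1)" using i
      by (cases i) auto
    finally show ?thesis using True i epos by (simp add: wit_def)
  next
    case False
    then have ii: "i = n - 1" "i + 1 = n" using i by auto
    have "((1/2::real) ^ (2 ^ (i-1)))\<^sup>2 = (1/2) ^ (2 ^ (i-1) * 2)"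
      by (simp add: power_mult)
    also have "2 ^ (i-1) * 2 = (2::nat) ^ (n-1)"
    proof -
      obtain k where k: "i = Suc k" using i by (cases i) auto
      then have "n - 1 = Suc k" using ii by simp
      then show ?thesis using k by simp
    qed
    moreover have "wit n a b i = (1/2) ^ (2 ^ (i-1))"
    proof -
      have "i \<noteq> n+1" "i \<noteq> n+2" "1 \<le> i" "i < n" using ii n i by auto
      then show ?thesis unfolding wit_def by simp
    qed
    ultimately have "(wit n a b i)\<^sup>2 = 1 / 2 ^ (2 ^ (n - 1))"
      by (simp add: power_one_over)
    moreover have "wit n a b (i+1) = 0" using ii n by (simp add: wit_def)
    ultimately show ?thesis using e by simp
  qed
  show ?thesis unfolding eps_feasible_def using n a b c
    by (auto simp: wit_def)
qed

lemma wit_sol: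
  assumes n: "n \<ge> 2" and e: "\<epsilon> \<ge> 1 / 2 ^ (2 ^ (n - 1))"
    and a: "0 \<le> a" "a \<le> fst x" and b: "- snd x \<le> b" "b \<le> snd x"
  shows "wit n a b \<in> follower_sol n \<epsilon> x"
proof -
  have f: "eps_feasible n \<epsilon> x (wit n a b)" using wit_feas[OF assms] .
  have v: "ll_obj n x (wit n a b) = 1/2" using n by (simp add: ll_obj_def wit_def)
  have "ll_obj n x z \<le> 1/2" if z: "eps_feasible n \<epsilon> x z" for z
  proof -
    have "z n \<ge> 0" "z 1 + z n = 1/2" "z (n+1) \<le> fst x" "z (n+2) \<le> snd x"
      using z n unfolding eps_feasible_def by auto
    moreover have "z n * (fst x + snd x - z (n+1) - z (n+2)) \<ge> 0"
      using calculation by (intro mult_nonneg_nonneg) auto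
    ultimately show ?thesis unfolding ll_obj_def by linarith
  qed
  then have "\<forall>z. eps_feasible n \<epsilon> x z \<longrightarrow> ll_obj n x z \<le> ll_obj n x (wit n a b)"
    by (simp only: v) blast
  then show ?thesis using f unfolding follower_sol_def by blast
qed

lemma sol_bounds:
  assumes "y \<in> follower_sol n \<epsilon> x"
  shows "0 \<le> y (n+1)" "y (n+1) \<le> fst x" "- snd x \<le> y (n+2)" "y (n+2) \<le> snd x"
  using assms unfolding follower_sol_def eps_feasible_def by auto

theorem mainTheorem6:
  fixes n :: nat and xl1 xu1 xl2 xu2 \<epsilon> :: real
  assumes "n \<ge> 2"
    and "1 \<le> xl1" "xl1 < xu1" "1 \<le> xl2" "xl2 < xu2"
    and "\<epsilon> \<ge> 1 / 2 ^ (2 ^ (n - 1))"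
  defines "X \<equiv> {xl1..xu1} \<times> {xl2..xu2}"
    and "S \<equiv> follower_sol n \<epsilon>"
    and "F \<equiv> ul_obj n"
  shows
    \<comment> \<open>optimistic problem: optimal solution (xu1, xu2), value xu1 + xu2\<close>
    "((xu1, xu2) \<in> X \<and>
     (\<exists>y\<in>S (xu1, xu2). F (xu1, xu2) y = xu1 + xu2) \<and>
     (\<forall>x\<in>X. \<forall>y\<in>S x. F x y \<le> xu1 + xu2)) \<and>
    \<comment> \<open>pessimistic problem: optimal solution (xl1, xl2), value -xl1 - xl2\<close>
    ((xl1, xl2) \<in> X \<and>
     (\<exists>y\<in>S (xl1, xl2). F (xl1, xl2) y = - xl1 - xl2 \<and>
        (\<forall>z\<in>S (xl1, xl2). F (xl1, xl2) y \<le> F (xl1, xl2) z)) \<and>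
     (\<forall>x\<in>X. (INF y\<in>S x. ereal (F x y)) \<le> ereal (- xl1 - xl2)))"
proof -
  note n = assms(1) and e = assms(6)
  have 1: "(xu1, xu2) \<in> X" "(xl1, xl2) \<in> X" using assms by (auto simp: X_def)
  have 2: "\<exists>y\<in>S (xu1, xu2). F (xu1, xu2) y = xu1 + xu2"
  proof
    show "wit n 0 xu2 \<in> S (xu1, xu2)" unfolding S_def
      using assms by (intro wit_sol[OF n e]) auto
    show "F (xu1, xu2) (wit n 0 xu2) = xu1 + xu2" using n
      by (simp add: F_def ul_obj_def wit_def)
  qed
  have 3: "\<forall>x\<in>X. \<forall>y\<in>S x. F x y \<le> xu1 + xu2"
  proof (intro ballI)
    fix x y assume x: "x \<in> X" and y: "y \<in> S x"
    note sb = sol_bounds[OF y[unfolded S_def]]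
    show "F x y \<le> xu1 + xu2" using x sb unfolding F_def ul_obj_def X_def
      by (cases x) auto
  qed
  have lowsol: "wit n (fst x) (- snd x) \<in> S x \<and> F x (wit n (fst x) (- snd x)) = - fst x - snd x"
    if x: "x \<in> X" for x
  proof
    show "wit n (fst x) (- snd x) \<in> S x" unfolding S_def
      using x assms by (intro wit_sol[OF n e]) (auto simp: X_def)
    show "F x (wit n (fst x) (- snd x)) = - fst x - snd x" using n
      by (simp add: F_def ul_obj_def wit_def)
  qed
  have 4: "\<exists>y\<in>S (xl1, xl2). F (xl1, xl2) y = - xl1 - xl2 \<and>
        (\<forall>z\<in>S (xl1, xl2). F (xl1, xl2) y \<le> F (xl1, xl2) z)"
  proof
    let ?y = "wit n xl1 (- xl2)"
    show "?y \<in> S (xl1, xl2)" using lowsol[OF 1(2)] by simp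
    show "F (xl1, xl2) ?y = - xl1 - xl2 \<and> (\<forall>z\<in>S (xl1, xl2). F (xl1, xl2) ?y \<le> F (xl1, xl2) z)"
    proof
      show "F (xl1, xl2) ?y = - xl1 - xl2" using lowsol[OF 1(2)] by simp
      show "\<forall>z\<in>S (xl1, xl2). F (xl1, xl2) ?y \<le> F (xl1, xl2) z"
      proof
        fix z assume z: "z \<in> S (xl1, xl2)"
        note sb = sol_bounds[OF z[unfolded S_def]]
        show "F (xl1, xl2) ?y \<le> F (xl1, xl2) z" using lowsol[OF 1(2)] sb
          by (simp add: F_def ul_obj_def)
      qed
    qed
  qed
  have 5: "\<forall>x\<in>X. (INF y\<in>S x. ereal (F x y)) \<le> ereal (- xl1 - xl2)"
  proof
    fix x assume x: "x \<in> X"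
    have "(INF y\<in>S x. ereal (F x y)) \<le> ereal (F x (wit n (fst x) (- snd x)))"
      using lowsol[OF x] by (intro INF_lower) auto
    also have "\<dots> \<le> ereal (- xl1 - xl2)" using lowsol[OF x] x
      by (cases x) (auto simp: X_def)
    finally show "(INF y\<in>S x. ereal (F x y)) \<le> ereal (- xl1 - xl2)" .
  qed
  show ?thesis using 1 2 3 4 5 by blast
qed

end
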